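(* Let $f:\mathbb{P}^2\to\mathbb{P}^2$ be a holomorphic map and $\ell\subset\mathbb{P}^2$ a line with $f(\ell)\subset\ell$. Suppose that the fixed points $p_1,\dots,p_k$ of $f|_\ell$ are all simple. Let $\lambda_i,\mu_i$ be the eigenvalues of $Df|_{p_i}$, with $\lambda_i$ the eigenvalue tangent to $\ell$ (i.e. $\lambda_i=(f|_\ell)'(p_i)$). Then $$\sum_{i=1}^k\frac{1-\mu_i}{1-\lambda_i}=1.$$
   Context: A fixed point $p$ of $f|_\ell:\ell\to\ell$ is simple if $(f|_\ell)'(p)\neq1$. Since $\ell$ is invariant, $T_p\ell$ is an invariant subspace of $Df|_p$, so the eigenvalue $\lambda_i$ along $\ell$ and the other eigenvalue $\mu_i$ are well defined. *)

theory Defs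
  imports "HOL-Analysis.Analysis"
begin

text \<open>Points of P^2 are represented by nonzero homogeneous coordinate vectors in complex^3.\<close>

definition monom3 :: "nat \<times> nat \<times> nat \<Rightarrow> complex^3 \<Rightarrow> complex" where
  "monom3 e z = z$1 ^ fst e * z$2 ^ fst (snd e) * z$3 ^ snd (snd e)"

definition exps :: "nat \<Rightarrow> (nat \<times> nat \<times> nat) set" where
  "exps d = {e. fst e + fst (snd e) + snd (snd e) = d}"

definition hom_poly_map :: "nat \<Rightarrow> (complex^3 \<Rightarrow> complex^3) \<Rightarrow> bool" where
  "hom_poly_map d F \<longleftrightarrow>
     (\<exists>C :: 3 \<Rightarrow> nat \<times> nat \<times> nat \<Rightarrow> complex.
        \<forall>z i. F z $ i = (\<Sum>e\<in>exps d. C i e * monom3 e z))"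

text \<open>Homogeneous lift of a holomorphic map P^2 -> P^2 of algebraic degree d
  (by Chow's theorem every holomorphic self-map of P^2 arises this way).\<close>
definition holo_P2_lift :: "nat \<Rightarrow> (complex^3 \<Rightarrow> complex^3) \<Rightarrow> bool" where
  "holo_P2_lift d F \<longleftrightarrow> hom_poly_map d F \<and> (\<forall>z. F z = 0 \<longrightarrow> z = 0)"

text \<open>Linear form defining a line: the line is {[z] . lf a z = 0}, a \<noteq> 0.\<close>
definition lf :: "complex^3 \<Rightarrow> complex^3 \<Rightarrow> complex" where
  "lf a z = (\<Sum>i\<in>UNIV. a$i * z$i)"

definition proj_eq :: "complex^3 \<Rightarrow> complex^3 \<Rightarrow> bool" where
  "proj_eq p q \<longleftrightarrow> p \<noteq> 0 \<and> q \<noteq> 0 \<and> (\<exists>t::complex. q = t *s p)"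

definition line_fixed :: "complex^3 \<Rightarrow> (complex^3 \<Rightarrow> complex^3) \<Rightarrow> complex^3 \<Rightarrow> bool" where
  "line_fixed a F p \<longleftrightarrow> p \<noteq> 0 \<and> lf a p = 0 \<and> (\<exists>c::complex. F p = c *s p)"

definition fix_mult :: "(complex^3 \<Rightarrow> complex^3) \<Rightarrow> complex^3 \<Rightarrow> complex" where
  "fix_mult F p = (SOME c. F p = c *s p)"

text \<open>At a fixed point [p] with F p = c p, Df on T_[p] P^2 = C^3 / C p is the map
  induced by (1/c) DF(p).\<close>
definition lin_at :: "(complex^3 \<Rightarrow> complex^3) \<Rightarrow> complex^3 \<Rightarrow> complex^3 \<Rightarrow> complex^3" where
  "lin_at F p v = inverse (fix_mult F p) *s frechet_derivative F (at p) v"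

text \<open>lam is the eigenvalue of Df at [p] along the tangent line T_p l, i.e. (f|_l)'(p).\<close>
definition tangent_eig :: "complex^3 \<Rightarrow> (complex^3 \<Rightarrow> complex^3) \<Rightarrow> complex^3 \<Rightarrow> complex \<Rightarrow> bool" where
  "tangent_eig a F p lam \<longleftrightarrow>
     (\<exists>v. lf a v = 0 \<and> \<not> (\<exists>t::complex. v = t *s p) \<and>
          (\<exists>\<alpha>::complex. lin_at F p v = lam *s v + \<alpha> *s p))"

text \<open>lam, mu are the two eigenvalues (with multiplicity) of Df at [p]: the
  characteristic polynomial of the induced map on C^3 / C p is (x-lam)(x-mu).\<close>
definition eig_pair :: "(complex^3 \<Rightarrow> complex^3) \<Rightarrow> complex^3 \<Rightarrow> complex \<Rightarrow> complex \<Rightarrow> bool" where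
  "eig_pair F p lam mu \<longleftrightarrow>
     (\<exists>v w. (\<forall>x y z::complex. x *s p + y *s v + z *s w = 0 \<longrightarrow> x = 0 \<and> y = 0 \<and> z = 0) \<and>
        (\<exists>a11 a12 a21 a22 \<alpha> \<beta> :: complex.
           lin_at F p v = \<alpha> *s p + a11 *s v + a21 *s w \<and>
           lin_at F p w = \<beta> *s p + a12 *s v + a22 *s w \<and>
           a11 + a22 = lam + mu \<and> a11 * a22 - a12 * a21 = lam * mu))"

end

theory Submission
  imports Defs "HOL-Computational_Algebra.Polynomial" "HOL-Computational_Algebra.Fundamental_Theorem_Algebra"
begin

lemma lf_add: "lf a (x + y) = lf a x + lf a y"
  by (simp add: lf_def sum.distrib algebra_simps)
lemma lf_scale: "lf a (k *s x) = k * lf a x"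
  by (simp add: lf_def sum_distrib_left algebra_simps)
lemma lf_diff: "lf a (x - y) = lf a x - lf a y"
  by (simp add: lf_def sum_subtractf algebra_simps)
lemma lf_zero[simp]: "lf a 0 = 0"
  by (simp add: lf_def)
lemma lf_3: "lf a z = a$1 * z$1 + a$2 * z$2 + a$3 * z$3"
  by (simp add: lf_def sum_3)

definition cr :: "complex^3 \<Rightarrow> complex^3 \<Rightarrow> complex^3" where
  "cr x y = vector [x$2*y$3 - x$3*y$2, x$3*y$1 - x$1*y$3, x$1*y$2 - x$2*y$1]"

lemma cr_nth[simp]: "cr x y $ 1 = x$2*y$3 - x$3*y$2" "cr x y $ 2 = x$3*y$1 - x$1*y$3"
  "cr x y $ 3 = x$1*y$2 - x$2*y$1"
  by (simp_all add: cr_def)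

lemma vec3_eq: "(x::complex^3) = y \<longleftrightarrow> x$1 = y$1 \<and> x$2 = y$2 \<and> x$3 = y$3"
  by (simp add: vec_eq_iff forall_3)

lemma cramer:
  assumes "lf (cr u1 u2) u3 = 1"
  shows "z = lf (cr u2 u3) z *s u1 + lf (cr u3 u1) z *s u2 + lf (cr u1 u2) z *s u3"
  using assms unfolding vec3_eq lf_3 by (simp add: algebra_simps) algebra

lemma cramer_coeffs:
  assumes "lf (cr u1 u2) u3 = 1"
  shows "lf (cr u2 u3) u1 = 1" "lf (cr u2 u3) u2 = 0" "lf (cr u2 u3) u3 = 0"
    "lf (cr u3 u1) u1 = 0" "lf (cr u3 u1) u2 = 1" "lf (cr u3 u1) u3 = 0"
    "lf (cr u1 u2) u1 = 0" "lf (cr u1 u2) u2 = 0"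
  using assms unfolding lf_3 by (simp_all add: algebra_simps)

lemma span3:
  fixes p v w :: "complex^3"
  assumes ind: "\<forall>x y z::complex. x *s p + y *s v + z *s w = 0 \<longrightarrow> x = 0 \<and> y = 0 \<and> z = 0"
  shows "\<exists>x y z. t = x *s p + y *s v + z *s w"
proof -
  define A :: "complex^3^3" where "A = (\<chi> i j. (if j = 1 then p else if j = 2 then v else w) $ i)"
  have Av: "A *v c = c$1 *s p + c$2 *s v + c$3 *s w" for c
    unfolding vec3_eq by (simp add: A_def matrix_vector_mult_def sum_3 algebra_simps)
  have "\<forall>c. A *v c = 0 \<longrightarrow> c = 0"
  proof (intro allI impI)
    fix c :: "complex^3" assume "A *v c = 0"
    then have "c$1 = 0 \<and> c$2 = 0 \<and> c$3 = 0" using ind unfolding Av by blast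
    then show "c = 0" by (simp add: vec3_eq)
  qed
  then obtain B where "B ** A = mat 1" using matrix_left_invertible_ker by blast
  then have "A ** B = mat 1" using matrix_left_right_inverse by blast
  then have "A *v (B *v t) = t" by (metis matrix_vector_mul_assoc matrix_vector_mul_lid)
  then show ?thesis unfolding Av by metis
qed

lemma vec_lambda_has_derivative:
  fixes f :: "'n::finite \<Rightarrow> 'a::real_normed_vector \<Rightarrow> complex"
  assumes "\<And>j. (f j has_derivative f' j) (at a)"
  shows "((\<lambda>x. \<chi> j. f j x) has_derivative (\<lambda>h. \<chi> j. f' j h)) (at a)"
  apply (subst has_derivative_componentwise_within)
  apply (auto simp: Basis_vec_def inner_axis)
  apply (rule bounded_linear.has_derivative[OF bounded_linear_inner_left assms])
  done

definition dmon :: "nat \<times> nat \<times> nat \<Rightarrow> complex^3 \<Rightarrow> complex^3 \<Rightarrow> complex" where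
  "dmon e z w = of_nat (fst e) * z$1^(fst e - 1) * w$1 * z$2^fst(snd e) * z$3^snd(snd e)
     + of_nat (fst (snd e)) * z$1^fst e * z$2^(fst(snd e) - 1) * w$2 * z$3^snd(snd e)
     + of_nat (snd (snd e)) * z$1^fst e * z$2^fst(snd e) * z$3^(snd(snd e)-1) * w$3"

lemma monom3_has_derivative: "(monom3 e has_derivative dmon e z) (at z)"
proof -
  have "((\<lambda>z. z$1 ^ fst e * z$2 ^ fst (snd e) * z$3 ^ snd (snd e)) has_derivative dmon e z) (at z)"
    by (rule derivative_eq_intros bounded_linear.has_derivative[OF bounded_linear_vec_nth] has_derivative_ident refl)+
       (auto simp: dmon_def algebra_simps)
  then show ?thesis unfolding monom3_def[abs_def] .
qed

lemma finite_exps: "finite (exps d)"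
proof -
  have "exps d \<subseteq> {..d} \<times> {..d} \<times> {..d}" by (auto simp: exps_def)
  then show ?thesis by (rule finite_subset) auto
qed

lemma fix_mult_eq:
  assumes "F p = c *s p" "p \<noteq> 0"
  shows "fix_mult F p = c"
proof -
  have "F p = fix_mult F p *s p" unfolding fix_mult_def using someI[of "\<lambda>c. F p = c *s p" c] assms(1) by simp
  then have "(fix_mult F p - c) *s p = 0" using assms(1) by (metis vector_sub_rdistrib diff_self)
  then show ?thesis using assms(2) by (metis vector_mul_eq_0 right_minus_eq)
qed

lemma of_nat_pow_pred: "of_nat k * (x::complex)^(k-1) * x = of_nat k * x^k"
  by (cases k) auto

lemma dmon_euler:
  assumes "e \<in> exps d"
  shows "dmon e z z = of_nat d * monom3 e z"
proof -
  obtain e1 e2 e3 where e: "e = (e1,e2,e3)" by (cases e) auto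
  have d: "d = e1 + e2 + e3" using assms by (auto simp: exps_def e)
  have "dmon e z z = (of_nat e1 * z$1^(e1-1) * z$1) * z$2^e2 * z$3^e3
     + (of_nat e2 * z$2^(e2-1) * z$2) * z$1^e1 * z$3^e3 + (of_nat e3 * z$3^(e3-1) * z$3) * z$1^e1 * z$2^e2"
    by (simp add: dmon_def e algebra_simps)
  also have "\<dots> = of_nat d * monom3 e z"
    unfolding of_nat_pow_pred by (simp add: monom3_def e d algebra_simps)
  finally show ?thesis .
qed

lemma monom3_scale:
  assumes "e \<in> exps d"
  shows "monom3 e (k *s z) = k^d * monom3 e z"
proof -
  obtain e1 e2 e3 where e: "e = (e1,e2,e3)" by (cases e) auto
  have d: "d = e1 + e2 + e3" using assms by (auto simp: exps_def e)
  show ?thesis by (simp add: monom3_def e d power_mult_distrib power_add algebra_simps)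
qed

lemma pow_pred_scale:
  assumes "m = k + j"
  shows "of_nat k * (c * (x::complex))^(k-1) * c^j = c^(m-1) * (of_nat k * x^(k-1))"
proof (cases k)
  case 0 then show ?thesis by simp
next
  case (Suc k') then show ?thesis using assms by (simp add: power_mult_distrib power_add algebra_simps)
qed

lemma dmon_scale:
  assumes "e \<in> exps d"
  shows "dmon e (k *s z) w = k^(d-1) * dmon e z w"
proof -
  obtain e1 e2 e3 where e: "e = (e1,e2,e3)" by (cases e) auto
  have d: "d = e1 + e2 + e3" using assms by (auto simp: exps_def e)
  have 1: "of_nat e1 * (k * z$1)^(e1-1) * k^(e2+e3) = k^(d-1) * (of_nat e1 * z$1^(e1-1))"
    by (rule pow_pred_scale) (simp add: d)
  have 2: "of_nat e2 * (k * z$2)^(e2-1) * k^(e1+e3) = k^(d-1) * (of_nat e2 * z$2^(e2-1))"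
    by (rule pow_pred_scale) (simp add: d)
  have 3: "of_nat e3 * (k * z$3)^(e3-1) * k^(e1+e2) = k^(d-1) * (of_nat e3 * z$3^(e3-1))"
    by (rule pow_pred_scale) (simp add: d)
  have "dmon e (k *s z) w = (of_nat e1 * (k * z$1)^(e1-1) * k^(e2+e3)) * w$1 * z$2^e2 * z$3^e3
     + (of_nat e2 * (k * z$2)^(e2-1) * k^(e1+e3)) * z$1^e1 * w$2 * z$3^e3
     + (of_nat e3 * (k * z$3)^(e3-1) * k^(e1+e2)) * z$1^e1 * z$2^e2 * w$3"
    by (simp add: dmon_def e power_mult_distrib power_add algebra_simps)
  also have "\<dots> = k^(d-1) * dmon e z w"
    unfolding 1 2 3 by (simp add: dmon_def e algebra_simps)
  finally show ?thesis .
qed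

lemma dmon_linear: "dmon e z (x *s v + y *s w) = x * dmon e z v + y * dmon e z w"
  by (simp add: dmon_def algebra_simps)

lemma dmon_add: "dmon e z (v + w) = dmon e z v + dmon e z w"
  by (simp add: dmon_def algebra_simps)

lemma dmon_smult: "dmon e z (x *s v) = x * dmon e z v"
  by (simp add: dmon_def algebra_simps)

lemma coeff_mult_bound:
  fixes p q :: "'a::comm_semiring_1 poly"
  assumes "degree p \<le> m" "degree q \<le> n"
  shows "coeff (p * q) (m + n) = coeff p m * coeff q n"
proof -
  have "coeff (p * q) (m + n) = (\<Sum>i\<le>m+n. coeff p i * coeff q (m + n - i))"
    by (rule coeff_mult)
  also have "\<dots> = coeff p m * coeff q (m + n - m)"
  proof -
    have "(\<Sum>i\<in>{..m+n} - {m}. coeff p i * coeff q (m + n - i)) = 0"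
    proof (rule sum.neutral, intro ballI)
      fix i assume "i \<in> {..m+n} - {m}"
      then show "coeff p i * coeff q (m + n - i) = 0"
        using assms by (cases "i < m") (auto simp: coeff_eq_0)
    qed
    then show ?thesis by (subst sum.remove[of _ m]) auto
  qed
  finally show ?thesis by simp
qed

lemma linpow_degree: "degree ([:b, a:] ^ k) \<le> k"
  by (rule order.trans[OF degree_power_le]) auto

lemma linpow_coeff: "coeff ([:b, a:] ^ k) k = a ^ k"
proof (induction k)
  case (Suc k)
  have "coeff ([:b, a:] * [:b, a:] ^ k) (1 + k) = coeff [:b,a:] 1 * coeff ([:b, a:] ^ k) k"
    by (rule coeff_mult_bound) (auto simp: linpow_degree)
  then show ?case using Suc by simp
qed simp

definition mpoly :: "complex^3 \<Rightarrow> complex^3 \<Rightarrow> nat \<times> nat \<times> nat \<Rightarrow> complex poly" where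
  "mpoly u v e = [:v$1, u$1:]^fst e * [:v$2, u$2:]^fst (snd e) * [:v$3, u$3:]^snd (snd e)"

lemma poly_mpoly: "poly (mpoly u v e) x = monom3 e (x *s u + v)"
  by (simp add: mpoly_def monom3_def algebra_simps)

lemma mpoly_degree: "e \<in> exps d \<Longrightarrow> degree (mpoly u v e) \<le> d"
  unfolding mpoly_def exps_def
  by (auto intro!: order.trans[OF degree_mult_le] add_mono linpow_degree)

lemma mpoly_coeff: assumes "e \<in> exps d" shows "coeff (mpoly u v e) d = monom3 e u"
proof -
  obtain e1 e2 e3 where e: "e = (e1,e2,e3)" by (cases e) auto
  have d: "d = e1 + e2 + e3" using assms by (auto simp: exps_def e)
  have "coeff ([:v$1, u$1:]^e1 * [:v$2, u$2:]^e2 * [:v$3, u$3:]^e3) (e1 + e2 + e3)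
     = coeff ([:v$1, u$1:]^e1 * [:v$2, u$2:]^e2) (e1 + e2) * coeff ([:v$3, u$3:]^e3) e3"
    by (rule coeff_mult_bound) (auto intro!: order.trans[OF degree_mult_le] add_mono linpow_degree)
  also have "coeff ([:v$1, u$1:]^e1 * [:v$2, u$2:]^e2) (e1 + e2) = u$1^e1 * u$2^e2"
    by (subst coeff_mult_bound) (auto simp: linpow_degree linpow_coeff)
  finally show ?thesis by (simp add: mpoly_def monom3_def e d linpow_coeff)
qed

definition dmpoly :: "complex^3 \<Rightarrow> complex^3 \<Rightarrow> complex^3 \<Rightarrow> nat \<times> nat \<times> nat \<Rightarrow> complex poly" where
  "dmpoly u v w e =
     smult (of_nat (fst e) * w$1) ([:v$1, u$1:]^(fst e - 1) * [:v$2, u$2:]^fst (snd e) * [:v$3, u$3:]^snd (snd e))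
   + smult (of_nat (fst (snd e)) * w$2) ([:v$1, u$1:]^fst e * [:v$2, u$2:]^(fst (snd e) - 1) * [:v$3, u$3:]^snd (snd e))
   + smult (of_nat (snd (snd e)) * w$3) ([:v$1, u$1:]^fst e * [:v$2, u$2:]^fst (snd e) * [:v$3, u$3:]^(snd (snd e) - 1))"

lemma poly_dmpoly: "poly (dmpoly u v w e) x = dmon e (x *s u + v) w"
  by (simp add: dmpoly_def dmon_def algebra_simps)

lemma smult_deg_lt:
  assumes "k = 0 \<or> degree p < d"
  shows "coeff (smult (of_nat k * c) p) d = 0" "degree (smult (of_nat k * c) p) \<le> d"
  using assms by (auto simp: coeff_eq_0 intro: order.trans[OF degree_smult_le])

lemma dmpoly_coeff_degree:
  assumes "e \<in> exps d"
  shows "coeff (dmpoly u v w e) d = 0" "degree (dmpoly u v w e) \<le> d"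
proof -
  obtain e1 e2 e3 where e: "e = (e1,e2,e3)" by (cases e) auto
  have d: "d = e1 + e2 + e3" using assms by (auto simp: exps_def e)
  have deg3: "degree ([:b1, a1:]^k1 * [:b2, a2:]^k2 * [:b3, a3:]^k3) \<le> k1 + k2 + k3" for a1 b1 a2 b2 a3 b3 :: complex and k1 k2 k3
    by (auto intro!: order.trans[OF degree_mult_le] add_mono linpow_degree)
  have c1: "e1 = 0 \<or> degree ([:v$1, u$1:]^(e1 - 1) * [:v$2, u$2:]^e2 * [:v$3, u$3:]^e3) < d"
    using deg3[of "v$1" "u$1" "e1-1" "v$2" "u$2" e2 "v$3" "u$3" e3] by (auto simp: d)
  have c2: "e2 = 0 \<or> degree ([:v$1, u$1:]^e1 * [:v$2, u$2:]^(e2 - 1) * [:v$3, u$3:]^e3) < d"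
    using deg3[of "v$1" "u$1" "e1" "v$2" "u$2" "e2-1" "v$3" "u$3" e3] by (auto simp: d)
  have c3: "e3 = 0 \<or> degree ([:v$1, u$1:]^e1 * [:v$2, u$2:]^e2 * [:v$3, u$3:]^(e3-1)) < d"
    using deg3[of "v$1" "u$1" "e1" "v$2" "u$2" "e2" "v$3" "u$3" "e3-1"] by (auto simp: d)
  note t1 = smult_deg_lt(1)[OF c1, of "w$1"] and t2 = smult_deg_lt(1)[OF c2, of "w$2"] and t3 = smult_deg_lt(1)[OF c3, of "w$3"]
  show "coeff (dmpoly u v w e) d = 0"
    unfolding dmpoly_def e coeff_add fst_conv snd_conv t1 t2 t3 by simp
  show "degree (dmpoly u v w e) \<le> d"
    unfolding dmpoly_def e using smult_deg_lt(2)[OF c1] smult_deg_lt(2)[OF c2] smult_deg_lt(2)[OF c3]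
    by (auto intro!: degree_add_le)
qed

lemma monom3_line_deriv:
  "((\<lambda>x. monom3 e (x *s u + v)) has_field_derivative dmon e (x *s u + v) u) (at x)"
proof -
  have "((\<lambda>x. (x * u$1 + v$1) ^ fst e * (x * u$2 + v$2) ^ fst (snd e) * (x * u$3 + v$3) ^ snd (snd e))
     has_field_derivative dmon e (x *s u + v) u) (at x)"
    by (rule derivative_eq_intros refl)+ (simp add: dmon_def algebra_simps)
  then show ?thesis by (simp add: monom3_def algebra_simps)
qed

lemma pderiv_sum: "pderiv (\<Sum>i\<in>A. f i) = (\<Sum>i\<in>A. pderiv (f i))"
  by (induction A rule: infinite_finite_induct) (auto simp: pderiv_add)

lemma prod_lin_degree_coeff:
  fixes T :: "complex set"
  assumes "finite T"
  shows "degree (\<Prod>y\<in>T. [:-y, 1:]) = card T" "coeff (\<Prod>y\<in>T. [:-y, 1:]) (card T) = 1"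
proof -
  show d: "degree (\<Prod>y\<in>T. [:-y, 1:]) = card T"
    by (subst degree_prod_eq_sum_degree) auto
  have "lead_coeff (\<Prod>y\<in>T. [:-y, 1:]) = 1" by (simp add: lead_coeff_prod)
  then show "coeff (\<Prod>y\<in>T. [:-y, 1:]) (card T) = 1" using d by simp
qed

lemma lagrange_sum:
  fixes S :: "complex set" and g :: "complex poly"
  assumes fin: "finite S" and ne: "S \<noteq> {}" and deg: "degree g < card S"
  shows "(\<Sum>x\<in>S. poly g x / (\<Prod>y\<in>S-{x}. (x - y))) = coeff g (card S - 1)"
proof -
  define n where "n = card S"
  have n1: "n \<ge> 1" using fin ne by (simp add: n_def Suc_leI card_gt_0_iff)
  have cardm: "card (S - {x}) = n - 1" if "x \<in> S" for x
    using that fin by (simp add: n_def)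
  define L where "L = (\<Sum>x\<in>S. smult (poly g x / (\<Prod>y\<in>S-{x}. (x - y))) (\<Prod>y\<in>S-{x}. [:-y, 1:]))"
  have nz: "(\<Prod>y\<in>S-{x}. (x - y)) \<noteq> 0" if "x \<in> S" for x
    using fin by (auto simp: prod_zero_iff)
  have polyL: "poly L z = poly g z" if z: "z \<in> S" for z
  proof -
    have "poly L z = (\<Sum>x\<in>S. poly g x / (\<Prod>y\<in>S-{x}. (x - y)) * (\<Prod>y\<in>S-{x}. (z - y)))"
      by (simp add: L_def poly_sum poly_prod)
    also have "\<dots> = poly g z / (\<Prod>y\<in>S-{z}. (z - y)) * (\<Prod>y\<in>S-{z}. (z - y))"
    proof -
      have "(\<Sum>x\<in>S-{z}. poly g x / (\<Prod>y\<in>S-{x}. (x - y)) * (\<Prod>y\<in>S-{x}. (z - y))) = 0"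
      proof (rule sum.neutral, intro ballI)
        fix x assume "x \<in> S - {z}"
        then have "(\<Prod>y\<in>S-{x}. (z - y)) = 0" using fin z by (auto simp: prod_zero_iff)
        then show "poly g x / (\<Prod>y\<in>S-{x}. (x - y)) * (\<Prod>y\<in>S-{x}. (z - y)) = 0" by simp
      qed
      then show ?thesis using fin z by (subst sum.remove[of _ z]) auto
    qed
    also have "\<dots> = poly g z" using nz[OF z] by simp
    finally show ?thesis .
  qed
  have degL: "degree L \<le> n - 1"
    unfolding L_def
    by (intro degree_sum_le order.trans[OF degree_smult_le]) (auto simp: prod_lin_degree_coeff fin cardm n_def)
  have "g - L = 0"
  proof (rule ccontr)
    assume H: "g - L \<noteq> 0"
    have "S \<subseteq> {x. poly (g - L) x = 0}" using polyL by auto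
    then have "card S \<le> card {x. poly (g - L) x = 0}"
      using poly_roots_finite[OF H] by (rule card_mono[rotated])
    also have "\<dots> \<le> degree (g - L)" by (rule card_poly_roots_bound[OF H])
    also have "\<dots> \<le> n - 1" using degL deg n_def by (intro degree_diff_le) auto
    finally show False using n1 n_def by simp
  qed
  then have gL: "g = L" by simp
  have "coeff L (n - 1) = (\<Sum>x\<in>S. poly g x / (\<Prod>y\<in>S-{x}. (x - y)))"
    unfolding L_def coeff_sum coeff_smult
  proof (intro sum.cong refl)
    fix x assume x: "x \<in> S"
    have "coeff (\<Prod>y\<in>S-{x}. [:-y, 1:]) (n - 1) = 1"
      using prod_lin_degree_coeff(2)[of "S - {x}"] fin cardm[OF x] by simp
    then show "poly g x / (\<Prod>y\<in>S-{x}. (x - y)) * coeff (\<Prod>y\<in>S-{x}. [:-y, 1:]) (n - 1)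
      = poly g x / (\<Prod>y\<in>S-{x}. (x - y))" by simp
  qed
  then show ?thesis using gL n_def by simp
qed


lemma trace_alg:
  fixes y z a11 a12 a21 a22 l \<nu> L1 L2 :: complex
  assumes r1: "y*a11 + z*a12 = l*y" and r2: "y*a21 + z*a22 = l*z"
    and l1: "a11*L1 + a21*L2 = \<nu>*L1" and l2: "a12*L1 + a22*L2 = \<nu>*L2"
    and o: "y*L1 + z*L2 = 0" and yz: "y \<noteq> 0 \<or> z \<noteq> 0" and L: "L1 \<noteq> 0 \<or> L2 \<noteq> 0"
  shows "a11 + a22 = l + \<nu>"
proof -
  define T where "T = a11 + a22 - l - \<nu>"
  have A: "T*y*L2 = 0" unfolding T_def using r1 l2 o by algebra
  have B: "T*z*L1 = 0" unfolding T_def using r2 l1 o by algebra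
  have "T = 0"
  proof (rule ccontr)
    assume T: "T \<noteq> 0"
    then have yL2: "y*L2 = 0" and zL1: "z*L1 = 0" using A B by (simp_all add: mult.assoc)
    show False
    proof (cases "y = 0")
      case True
      then have "z \<noteq> 0" using yz by simp
      then have "L1 = 0" using zL1 by simp
      then have "L2 \<noteq> 0" using L by simp
      then have "z*L2 \<noteq> 0" using \<open>z \<noteq> 0\<close> by simp
      then show False using o True by simp
    next
      case False
      then have "L2 = 0" using yL2 by simp
      then have "L1 \<noteq> 0" using L by simp
      then show False using o False \<open>L2 = 0\<close> by simp
    qed
  qed
  then show ?thesis unfolding T_def by algebra
qed


lemma trace_lemma:
  fixes L :: "complex^3 \<Rightarrow> complex^3"
  assumes ladd: "\<And>v w. L (v + w) = L v + L w" and lsc: "\<And>x v. L (x *s v) = x *s L v"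
    and Lp: "L p = \<delta> *s p" and nu: "\<And>y. lf a (L y) = \<nu> * lf a y" and u3: "lf a u3 \<noteq> 0"
    and ap: "lf a p = 0"
    and t: "lf a t = 0" "\<not> (\<exists>s. t = s *s p)" "L t = l *s t + \<beta> *s p"
    and ind: "\<forall>x y z::complex. x *s p + y *s v + z *s w = 0 \<longrightarrow> x = 0 \<and> y = 0 \<and> z = 0"
    and Lv: "L v = \<alpha> *s p + a11 *s v + a21 *s w" and Lw: "L w = \<beta>' *s p + a12 *s v + a22 *s w"
  shows "a11 + a22 = l + \<nu>"
proof -
  obtain x y z where txyz: "t = x *s p + y *s v + z *s w" using span3[OF ind] by blast
  have H: "x *s (\<delta> *s p) + y *s (\<alpha> *s p + a11 *s v + a21 *s w) + z *s (\<beta>' *s p + a12 *s v + a22 *s w)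
      = l *s (x *s p + y *s v + z *s w) + \<beta> *s p"
    using t(3) unfolding txyz ladd lsc Lp Lv Lw .
  have eqv: "(x*\<delta> + y*\<alpha> + z*\<beta>' - l*x - \<beta>) *s p + (y*a11 + z*a12 - l*y) *s v + (y*a21 + z*a22 - l*z) *s w
     = (x *s (\<delta> *s p) + y *s (\<alpha> *s p + a11 *s v + a21 *s w) + z *s (\<beta>' *s p + a12 *s v + a22 *s w))
       - (l *s (x *s p + y *s v + z *s w) + \<beta> *s p)"
    by (simp add: vec_eq_iff algebra_simps)
  have "(x*\<delta> + y*\<alpha> + z*\<beta>' - l*x - \<beta>) *s p + (y*a11 + z*a12 - l*y) *s v + (y*a21 + z*a22 - l*z) *s w = 0"
    unfolding eqv H by simp
  then have E: "y*a11 + z*a12 - l*y = 0" "y*a21 + z*a22 - l*z = 0" using ind by blast+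
  have yz: "y \<noteq> 0 \<or> z \<noteq> 0"
  proof (rule ccontr)
    assume "\<not> (y \<noteq> 0 \<or> z \<noteq> 0)"
    then have "t = x *s p" using txyz by simp
    then show False using t(2) by blast
  qed
  have lfc: "lf a (c1 *s p + c2 *s v + c3 *s w) = c2 * lf a v + c3 * lf a w" for c1 c2 c3
    by (simp add: lf_add lf_scale ap)
  have l1: "a11 * lf a v + a21 * lf a w = \<nu> * lf a v" using nu[of v] unfolding Lv lfc .
  have l2: "a12 * lf a v + a22 * lf a w = \<nu> * lf a w" using nu[of w] unfolding Lw lfc .
  have o: "y * lf a v + z * lf a w = 0" using t(1) unfolding txyz lfc .
  have L: "lf a v \<noteq> 0 \<or> lf a w \<noteq> 0"
  proof -
    obtain x' y' z' where "u3 = x' *s p + y' *s v + z' *s w" using span3[OF ind] by blast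
    then have "lf a u3 = y' * lf a v + z' * lf a w" using lfc by simp
    then show ?thesis using u3 by auto
  qed
  show ?thesis using trace_alg[OF _ _ l1 l2 o yz L] E by simp
qed



locale hp =
  fixes F :: "complex^3 \<Rightarrow> complex^3" and d :: nat and C :: "3 \<Rightarrow> nat \<times> nat \<times> nat \<Rightarrow> complex"
  assumes FC: "\<And>z i. F z $ i = (\<Sum>e\<in>exps d. C i e * monom3 e z)"
begin

definition DF where "DF z w = (\<chi> i. \<Sum>e\<in>exps d. C i e * dmon e z w)"
definition Fpoly where "Fpoly u v i = (\<Sum>e\<in>exps d. smult (C i e) (mpoly u v e))"
definition dFpoly where "dFpoly u v w i = (\<Sum>e\<in>exps d. smult (C i e) (dmpoly u v w e))"

lemma F_eq: "F = (\<lambda>z. \<chi> i. \<Sum>e\<in>exps d. C i e * monom3 e z)"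
  by (auto simp: vec_eq_iff FC)

lemma F_deriv: "(F has_derivative DF z) (at z)"
proof -
  have "((\<lambda>z. \<chi> i. \<Sum>e\<in>exps d. C i e * monom3 e z) has_derivative (\<lambda>w. \<chi> i. \<Sum>e\<in>exps d. C i e * dmon e z w)) (at z)"
    by (intro vec_lambda_has_derivative has_derivative_sum has_derivative_mult_right monom3_has_derivative)
  then show ?thesis unfolding F_eq DF_def[abs_def] .
qed

lemma DF_frechet: "frechet_derivative F (at z) = DF z"
  using frechet_derivative_at[OF F_deriv] by simp

lemma DF_smult: "DF z (k *s w) = k *s DF z w"
  by (simp add: DF_def vec_eq_iff dmon_smult sum_distrib_left algebra_simps)

lemma DF_add: "DF z (v + w) = DF z v + DF z w"
  by (simp add: DF_def vec_eq_iff dmon_add sum.distrib algebra_simps)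

lemma DF_lin: "DF z (x *s v + y *s w) = x *s DF z v + y *s DF z w"
  by (simp add: DF_add DF_smult)

lemma DF_euler: "DF z z = of_nat d *s F z"
  by (simp add: DF_def vec_eq_iff FC dmon_euler sum_distrib_left algebra_simps cong: sum.cong)

lemma F_scale: "F (k *s z) = k^d *s F z"
  by (simp add: vec_eq_iff FC monom3_scale sum_distrib_left algebra_simps cong: sum.cong)

lemma DF_scale: "DF (k *s z) w = k^(d-1) *s DF z w"
  by (simp add: DF_def vec_eq_iff dmon_scale sum_distrib_left algebra_simps cong: sum.cong)

lemma poly_Fpoly: "poly (Fpoly u v i) x = F (x *s u + v) $ i"
  by (simp add: Fpoly_def poly_sum poly_mpoly FC)

lemma Fpoly_degree: "degree (Fpoly u v i) \<le> d"
  unfolding Fpoly_def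
  by (intro degree_sum_le finite_exps order.trans[OF degree_smult_le] mpoly_degree) auto

lemma Fpoly_coeff: "coeff (Fpoly u v i) d = F u $ i"
  by (simp add: Fpoly_def coeff_sum mpoly_coeff FC cong: sum.cong)

lemma poly_dFpoly: "poly (dFpoly u v w i) x = DF (x *s u + v) w $ i"
  by (simp add: dFpoly_def poly_sum poly_dmpoly DF_def)

lemma dFpoly_degree: "degree (dFpoly u v w i) \<le> d"
  unfolding dFpoly_def
  by (intro degree_sum_le finite_exps order.trans[OF degree_smult_le] dmpoly_coeff_degree) auto

lemma dFpoly_coeff: "coeff (dFpoly u v w i) d = 0"
  by (simp add: dFpoly_def coeff_sum dmpoly_coeff_degree cong: sum.cong)

lemma Fpoly_pderiv: "poly (pderiv (Fpoly u v i)) x = DF (x *s u + v) u $ i"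
proof -
  have "((\<lambda>x. F (x *s u + v) $ i) has_field_derivative DF (x *s u + v) u $ i) (at x)"
    unfolding FC DF_def vec_lambda_beta
    by (intro DERIV_sum DERIV_cmult monom3_line_deriv)
  moreover have "(poly (Fpoly u v i) has_field_derivative poly (pderiv (Fpoly u v i)) x) (at x)"
    by (rule poly_DERIV)
  moreover have "poly (Fpoly u v i) = (\<lambda>x. F (x *s u + v) $ i)"
    by (simp add: poly_Fpoly fun_eq_iff)
  ultimately show ?thesis using DERIV_unique by metis
qed


definition Lpoly where "Lpoly b u v = (\<Sum>i\<in>UNIV. smult (b$i) (Fpoly u v i))"
definition dLpoly where "dLpoly b u v w = (\<Sum>i\<in>UNIV. smult (b$i) (dFpoly u v w i))"

lemma poly_Lpoly: "poly (Lpoly b u v) x = lf b (F (x *s u + v))"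
  by (simp add: Lpoly_def poly_sum poly_Fpoly lf_def)

lemma Lpoly_degree: "degree (Lpoly b u v) \<le> d"
  unfolding Lpoly_def
  by (intro degree_sum_le order.trans[OF degree_smult_le] Fpoly_degree) auto

lemma Lpoly_coeff: "coeff (Lpoly b u v) d = lf b (F u)"
  by (simp add: Lpoly_def coeff_sum Fpoly_coeff lf_def)

lemma Lpoly_pderiv: "poly (pderiv (Lpoly b u v)) x = lf b (DF (x *s u + v) u)"
  by (simp add: Lpoly_def pderiv_sum pderiv_smult poly_sum Fpoly_pderiv lf_def)

lemma poly_dLpoly: "poly (dLpoly b u v w) x = lf b (DF (x *s u + v) w)"
  by (simp add: dLpoly_def poly_sum poly_dFpoly lf_def)

lemma dLpoly_degree: "degree (dLpoly b u v w) \<le> d"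
  unfolding dLpoly_def
  by (intro degree_sum_le order.trans[OF degree_smult_le] dFpoly_degree) auto

lemma dLpoly_coeff: "coeff (dLpoly b u v w) d = 0"
  by (simp add: dLpoly_def coeff_sum dFpoly_coeff)

lemma W_invariant_deriv:
  assumes inv: "\<forall>z. z \<noteq> 0 \<and> lf a z = 0 \<longrightarrow> lf a (F z) = 0"
    and p: "lf a p = 0" "p \<noteq> 0" and w: "lf a w = 0"
  shows "lf a (DF p w) = 0"
proof -
  have sub: "x = y" if "x *s w + p = 0" "y *s w + p = 0" for x y
  proof -
    have "(x - y) *s w = (x *s w + p) - (y *s w + p)" by (simp add: vector_sub_rdistrib)
    then have "(x - y) *s w = 0" using that by simp
    then have "x = y \<or> w = 0" by (simp add: vector_mul_eq_0)
    then show "x = y" using that \<open>p \<noteq> 0\<close> by auto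
  qed
  have finB: "finite {x. x *s w + p = 0}"
  proof (cases "{x. x *s w + p = 0} = {}")
    case False
    then obtain x0 where "x0 *s w + p = 0" by auto
    then have "{x. x *s w + p = 0} \<subseteq> {x0}" using sub by auto
    then show ?thesis using finite_subset by blast
  qed simp
  have inf: "infinite (UNIV - {x. x *s w + p = 0})"
  proof
    assume "finite (UNIV - {x. x *s w + p = 0})"
    with finB have "finite (UNIV :: complex set)" by (metis Diff_partition finite_Un top_greatest)
    then show False using infinite_UNIV_char_0 by blast
  qed
  have "Lpoly a w p = 0"
  proof (rule ccontr)
    assume "Lpoly a w p \<noteq> 0"
    then have "finite {x. poly (Lpoly a w p) x = 0}" by (rule poly_roots_finite)
    moreover have "UNIV - {x. x *s w + p = 0} \<subseteq> {x. poly (Lpoly a w p) x = 0}"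
      using inv p w by (auto simp: poly_Lpoly lf_add lf_scale)
    ultimately show False using inf finite_subset by blast
  qed
  then have "poly (pderiv (Lpoly a w p)) 0 = 0" by simp
  then show ?thesis by (simp add: Lpoly_pderiv)
qed

lemma DF_d0: "d = 0 \<Longrightarrow> DF z w = 0"
proof -
  assume "d = 0"
  then have "exps d = {(0,0,0)}" by (auto simp: exps_def)
  then show ?thesis by (simp add: DF_def dmon_def vec_eq_iff)
qed

lemma lin_at_scale:
  assumes "F z = c *s z" "z \<noteq> 0" "c \<noteq> 0" "k \<noteq> 0"
  shows "lin_at F (k *s z) w = inverse c *s DF z w"
proof (cases "d = 0")
  case True
  have "DF (k *s z) w = 0" "DF z w = 0" using DF_d0[OF True] by auto
  then show ?thesis by (simp add: lin_at_def DF_frechet)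
next
  case False
  have kd: "k^d = k^(d-1) * k" using False by (metis power_minus_mult neq0_conv)
  have "F (k *s z) = (k^(d-1) * c) *s (k *s z)"
    by (simp add: F_scale assms(1) kd algebra_simps vec_eq_iff)
  moreover have "k *s z \<noteq> 0" using assms by (simp add: vector_mul_eq_0)
  ultimately have "fix_mult F (k *s z) = k^(d-1) * c" by (rule fix_mult_eq)
  then show ?thesis using assms by (simp add: lin_at_def DF_frechet DF_scale vec_eq_iff)
qed

end



context hp begin
lemma lin_at_add: "lin_at F p (v + w) = lin_at F p v + lin_at F p w"
  by (simp add: lin_at_def DF_frechet DF_add vector_add_ldistrib)
lemma lin_at_smult: "lin_at F p (x *s v) = x *s lin_at F p v"
  by (simp add: lin_at_def DF_frechet DF_smult vec_eq_iff algebra_simps)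
end

lemma lf_lin2: "lf b (x *s u + y *s w) = x * lf b u + y * lf b w"
  by (simp add: lf_add lf_scale)

locale chart0 = hp +
  fixes a u1 u2 u3 :: "complex^3"
  assumes cru: "cr u1 u2 = a" and u3: "lf a u3 = 1"
    and inv: "\<forall>z. z \<noteq> 0 \<and> lf a z = 0 \<longrightarrow> lf a (F z) = 0"
    and Fnz: "\<forall>z. F z = 0 \<longrightarrow> z = 0"
begin

abbreviation "k1 \<equiv> cr u2 u3"
abbreviation "k2 \<equiv> cr u3 u1"
definition "zx x = x *s u1 + u2"
definition "Pp = Lpoly k1 u1 u2"
definition "Qp = Lpoly k2 u1 u2"
definition "rp = pCons 0 Qp - Pp"
definition "Np = dLpoly a u1 u2 u3"

lemma det1: "lf (cr u1 u2) u3 = 1" using cru u3 by simp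

lemma co: "lf k1 u1 = 1" "lf k1 u2 = 0" "lf k1 u3 = 0" "lf k2 u1 = 0" "lf k2 u2 = 1" "lf k2 u3 = 0"
   "lf a u1 = 0" "lf a u2 = 0"
  using cramer_coeffs[OF det1] cru by auto

lemma decomp: "z = lf k1 z *s u1 + lf k2 z *s u2 + lf a z *s u3"
  using cramer[OF det1] cru by simp

lemma decompW: "lf a z = 0 \<Longrightarrow> z = lf k1 z *s u1 + lf k2 z *s u2"
  using decomp[of z] by simp

lemma zx_co: "lf a (zx x) = 0" "lf k1 (zx x) = x" "lf k2 (zx x) = 1"
  by (simp_all add: zx_def lf_add lf_scale co)

lemma zx_nz: "zx x \<noteq> 0"
  using zx_co(3)[of x] by auto

lemma u1_nz: "u1 \<noteq> 0" using co(1) by auto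

lemma F_zx: "F (zx x) = poly Pp x *s u1 + poly Qp x *s u2"
proof -
  have "lf a (F (zx x)) = 0" using inv zx_nz zx_co by blast
  then show ?thesis using decompW[of "F (zx x)"] by (simp add: Pp_def Qp_def poly_Lpoly zx_def)
qed

lemma DF_zx_u1: "DF (zx x) u1 = poly (pderiv Pp) x *s u1 + poly (pderiv Qp) x *s u2"
proof -
  have "lf a (DF (zx x) u1) = 0" using W_invariant_deriv[OF inv] zx_nz zx_co co by blast
  then show ?thesis using decompW[of "DF (zx x) u1"] by (simp add: Pp_def Qp_def Lpoly_pderiv zx_def)
qed

lemma poly_rp: "poly rp x = x * poly Qp x - poly Pp x"
  by (simp add: rp_def)

lemma pderiv_rp: "poly (pderiv rp) x = poly Qp x + x * poly (pderiv Qp) x - poly (pderiv Pp) x"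
  by (simp add: rp_def pderiv_diff pderiv_pCons)

lemma rp_root_F: assumes "poly rp x = 0" shows "F (zx x) = poly Qp x *s zx x"
proof -
  have P: "poly Pp x = x * poly Qp x" using assms by (simp add: poly_rp)
  show ?thesis unfolding F_zx P by (simp add: zx_def vec_eq_iff algebra_simps)
qed

lemma rp_root_Q: "poly rp x = 0 \<Longrightarrow> poly Qp x \<noteq> 0"
  using rp_root_F[of x] Fnz zx_nz by fastforce

lemma fixed_rp: "F (zx x) = c *s zx x \<Longrightarrow> poly rp x = 0"
proof -
  assume H: "F (zx x) = c *s zx x"
  have "lf k1 (F (zx x)) = c * x" "lf k2 (F (zx x)) = c" using H by (simp_all add: lf_scale zx_co)
  moreover have "lf k1 (F (zx x)) = poly Pp x" "lf k2 (F (zx x)) = poly Qp x"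
    by (simp_all add: F_zx lf_lin2 co)
  ultimately show ?thesis by (simp add: poly_rp)
qed

lemma lin_zx: assumes "poly rp x = 0" "k \<noteq> 0"
  shows "lin_at F (k *s zx x) w = inverse (poly Qp x) *s DF (zx x) w"
  using lin_at_scale[OF rp_root_F[OF assms(1)] zx_nz rp_root_Q[OF assms(1)] assms(2)] .

lemma lin_u1: assumes "poly rp x = 0" "k \<noteq> 0"
  shows "lin_at F (k *s zx x) u1 = ((poly (pderiv Pp) x - x * poly (pderiv Qp) x) / poly Qp x) *s u1
        + (poly (pderiv Qp) x / poly Qp x) *s zx x"
  unfolding lin_zx[OF assms] DF_zx_u1
  by (simp add: zx_def vec_eq_iff field_simps rp_root_Q[OF assms(1)])

lemma lin_zz: assumes "poly rp x = 0" "k \<noteq> 0"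
  shows "lin_at F (k *s zx x) (zx x) = of_nat d *s zx x"
  unfolding lin_zx[OF assms] DF_euler rp_root_F[OF assms(1)]
  using rp_root_Q[OF assms(1)] by (simp add: vec_eq_iff field_simps)

lemma lam_formula: assumes "poly rp x = 0"
  shows "1 - poly (pderiv rp) x / poly Qp x = (poly (pderiv Pp) x - x * poly (pderiv Qp) x) / poly Qp x"
  using rp_root_Q[OF assms] by (simp add: pderiv_rp field_simps)

lemma tangent_exists: assumes "poly rp x = 0"
  shows "tangent_eig a F (zx x) (1 - poly (pderiv rp) x / poly Qp x)"
  unfolding tangent_eig_def
proof (intro exI conjI)
  show "lf a u1 = 0" by (rule co)
  show "\<not> (\<exists>t. u1 = t *s zx x)"
  proof
    assume "\<exists>t. u1 = t *s zx x"
    then obtain t where "u1 = t *s zx x" by blast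
    then have "lf k2 u1 = lf k2 (t *s zx x)" by (rule arg_cong)
    then have "lf k2 u1 = t" by (simp add: lf_scale zx_co)
    then have "t = 0" using co by simp
    then show False using \<open>u1 = t *s zx x\<close> u1_nz by simp
  qed
  show "lin_at F (zx x) u1 = (1 - poly (pderiv rp) x / poly Qp x) *s u1 + (poly (pderiv Qp) x / poly Qp x) *s zx x"
    using lin_u1[OF assms, of 1] unfolding lam_formula[OF assms] by simp
qed

lemma coord_u1: assumes "c1 *s u1 + c2 *s zx x = c1' *s u1 + c2' *s zx x" shows "c1 = c1'"
proof -
  have phi: "lf k1 (e1 *s u1 + e2 *s zx x) - x * lf k2 (e1 *s u1 + e2 *s zx x) = e1" for e1 e2
    by (simp add: lf_lin2 co zx_co)
  show ?thesis using phi[of c1 c2] phi[of c1' c2'] assms by simp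
qed

lemma coord_zx: assumes "c1 *s u1 + c2 *s zx x = c1' *s u1 + c2' *s zx x" shows "c2 = c2'"
proof -
  have phi: "lf k2 (e1 *s u1 + e2 *s zx x) = e2" for e1 e2
    by (simp add: lf_lin2 co zx_co)
  show ?thesis using phi[of c1 c2] phi[of c1' c2'] assms by simp
qed

lemma tangent_unique:
  assumes r: "poly rp x = 0" and k: "k \<noteq> 0" and te: "tangent_eig a F (k *s zx x) l"
  shows "l = 1 - poly (pderiv rp) x / poly Qp x"
proof -
  define A where "A = (poly (pderiv Pp) x - x * poly (pderiv Qp) x) / poly Qp x"
  define B where "B = poly (pderiv Qp) x / poly Qp x"
  obtain v \<alpha> where v: "lf a v = 0" "\<not> (\<exists>t. v = t *s (k *s zx x))"
    "lin_at F (k *s zx x) v = l *s v + \<alpha> *s (k *s zx x)"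
    using te unfolding tangent_eig_def by blast
  define \<beta>1 where "\<beta>1 = lf k1 v"
  define \<beta>2 where "\<beta>2 = lf k2 v"
  define \<gamma> where "\<gamma> = \<beta>1 - x * \<beta>2"
  have "v = \<beta>1 *s u1 + \<beta>2 *s u2" unfolding \<beta>1_def \<beta>2_def by (rule decompW[OF v(1)])
  also have "\<dots> = \<gamma> *s u1 + \<beta>2 *s zx x" by (simp add: \<gamma>_def zx_def vec_eq_iff algebra_simps)
  finally have vdec: "v = \<gamma> *s u1 + \<beta>2 *s zx x" .
  have "\<gamma> \<noteq> 0"
  proof
    assume "\<gamma> = 0"
    then have "v = (\<beta>2 / k) *s (k *s zx x)" using vdec k by (simp add: vec_eq_iff)
    then show False using v(2) by blast
  qed
  have "lin_at F (k *s zx x) v = \<gamma> *s lin_at F (k *s zx x) u1 + \<beta>2 *s lin_at F (k *s zx x) (zx x)"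
    unfolding vdec lin_at_add lin_at_smult ..
  also have "\<dots> = (\<gamma> * A) *s u1 + (\<gamma> * B + \<beta>2 * of_nat d) *s zx x"
    unfolding lin_u1[OF r k] lin_zz[OF r k] A_def B_def by (simp add: vec_eq_iff algebra_simps)
  finally have L1: "lin_at F (k *s zx x) v = (\<gamma> * A) *s u1 + (\<gamma> * B + \<beta>2 * of_nat d) *s zx x" .
  have L2: "l *s v + \<alpha> *s (k *s zx x) = (l * \<gamma>) *s u1 + (l * \<beta>2 + \<alpha> * k) *s zx x"
    unfolding vdec by (simp add: vec_eq_iff algebra_simps)
  have "\<gamma> * A = l * \<gamma>" using coord_u1 L1 L2 v(3) by metis
  then have "l = A" using \<open>\<gamma> \<noteq> 0\<close> by simp
  then show ?thesis using lam_formula[OF r] A_def by simp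
qed

lemma normal_eig:
  assumes r: "poly rp x = 0" and k: "k \<noteq> 0"
  shows "lf a (lin_at F (k *s zx x) y) = (poly Np x / poly Qp x) * lf a y"
proof -
  have W1: "lf a (DF (zx x) u1) = 0" and W2: "lf a (DF (zx x) u2) = 0"
    using W_invariant_deriv[OF inv] zx_nz zx_co co by blast+
  have "lin_at F (k *s zx x) y = lf k1 y *s lin_at F (k *s zx x) u1 + lf k2 y *s lin_at F (k *s zx x) u2
      + lf a y *s lin_at F (k *s zx x) u3"
    by (subst decomp[of y]) (simp only: lin_at_add lin_at_smult)
  then have "lf a (lin_at F (k *s zx x) y) = lf a y * lf a (lin_at F (k *s zx x) u3)"
    using W1 W2 by (simp add: lf_add lf_scale lin_zx[OF r k])
  also have "lf a (lin_at F (k *s zx x) u3) = poly Np x / poly Qp x"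
  proof -
    have "poly Np x = lf a (DF (zx x) u3)" by (simp add: Np_def poly_dLpoly zx_def)
    then show ?thesis by (simp add: lin_zx[OF r k] lf_scale field_simps)
  qed
  finally show ?thesis by simp
qed

lemma mu_formula:
  assumes r: "poly rp x = 0" and k: "k \<noteq> 0" and te: "tangent_eig a F (k *s zx x) l"
    and ep: "eig_pair F (k *s zx x) l m"
  shows "m = poly Np x / poly Qp x"
proof -
  let ?p = "k *s zx x"
  let ?L = "lin_at F ?p"
  obtain t \<beta> where t: "lf a t = 0" "\<not> (\<exists>s. t = s *s ?p)" "?L t = l *s t + \<beta> *s ?p"
    using te unfolding tangent_eig_def by blast
  obtain v w a11 a12 a21 a22 \<alpha> \<beta>' where
    ind: "\<forall>x y z::complex. x *s ?p + y *s v + z *s w = 0 \<longrightarrow> x = 0 \<and> y = 0 \<and> z = 0"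
    and Lv: "?L v = \<alpha> *s ?p + a11 *s v + a21 *s w" and Lw: "?L w = \<beta>' *s ?p + a12 *s v + a22 *s w"
    and tr: "a11 + a22 = l + m"
    using ep unfolding eig_pair_def by blast
  have Lp: "?L ?p = of_nat d *s ?p"
    by (simp add: lin_at_smult lin_zz[OF r k] vec_eq_iff algebra_simps)
  have ap: "lf a ?p = 0" by (simp add: lf_scale zx_co)
  have u3': "lf a u3 \<noteq> 0" using u3 by simp
  have "a11 + a22 = l + poly Np x / poly Qp x"
    by (rule trace_lemma[OF lin_at_add lin_at_smult Lp normal_eig[OF r k] u3' ap t ind Lv Lw])
  then show ?thesis using tr by simp
qed
end


context hp begin
lemma fixed_scale:
  assumes "k \<noteq> 0"
  shows "(\<exists>c. F (k *s z) = c *s (k *s z)) \<longleftrightarrow> (\<exists>c. F z = c *s z)"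
proof
  assume "\<exists>c. F (k *s z) = c *s (k *s z)"
  then obtain c where "k^d *s F z = c *s (k *s z)" by (auto simp: F_scale)
  then have "F z = (c * k / k^d) *s z" using assms by (simp add: vec_eq_iff field_simps)
  then show "\<exists>c. F z = c *s z" by blast
next
  assume "\<exists>c. F z = c *s z"
  then obtain c where "F z = c *s z" by blast
  then have "F (k *s z) = (k^d * c / k) *s (k *s z)" using assms by (simp add: F_scale vec_eq_iff field_simps)
  then show "\<exists>c. F (k *s z) = c *s (k *s z)" by blast
qed
end

locale chart = chart0 +
  assumes u1nf: "\<not> (\<exists>c. F u1 = c *s u1)"
begin

lemma Q_lead: "coeff Qp d \<noteq> 0"
proof
  assume H: "coeff Qp d = 0"
  have "lf a (F u1) = 0" using inv u1_nz co by blast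
  then have "F u1 = lf k1 (F u1) *s u1 + lf k2 (F u1) *s u2" by (rule decompW)
  moreover have "lf k2 (F u1) = 0" using H by (simp add: Qp_def Lpoly_coeff)
  ultimately have "F u1 = lf k1 (F u1) *s u1" by simp
  then show False using u1nf by blast
qed

lemma rp_coeff: "coeff rp (Suc d) = coeff Qp d"
proof -
  have "coeff Pp (Suc d) = 0" using Lpoly_degree[of k1 u1 u2] by (simp add: Pp_def coeff_eq_0)
  then show ?thesis by (simp add: rp_def)
qed

lemma rp_degree: "degree rp = Suc d"
proof (rule antisym)
  have "degree (pCons 0 Qp) \<le> Suc d" using Lpoly_degree[of k2 u1 u2]
    by (cases "Qp = 0") (auto simp: Qp_def degree_pCons_eq)
  moreover have "degree Pp \<le> Suc d" using Lpoly_degree[of k1 u1 u2] by (simp add: Pp_def)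
  ultimately show "degree rp \<le> Suc d" unfolding rp_def by (rule degree_diff_le)
  show "Suc d \<le> degree rp" using Q_lead rp_coeff by (metis le_degree)
qed

lemma rp_nz: "rp \<noteq> 0" using rp_coeff Q_lead by auto

lemma lead_rp: "lead_coeff rp = coeff Qp d" using rp_degree rp_coeff by simp

lemma line_fixed_chart:
  assumes "line_fixed a F p"
  shows "lf k2 p \<noteq> 0" "p = lf k2 p *s zx (lf k1 p / lf k2 p)" "poly rp (lf k1 p / lf k2 p) = 0"
proof -
  have p0: "p \<noteq> 0" and pa: "lf a p = 0" and fx: "\<exists>c. F p = c *s p"
    using assms unfolding line_fixed_def by auto
  have pd: "p = lf k1 p *s u1 + lf k2 p *s u2" using decompW[OF pa] .
  show k2: "lf k2 p \<noteq> 0"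
  proof
    assume "lf k2 p = 0"
    then have pu: "p = lf k1 p *s u1" using pd by simp
    then have "lf k1 p \<noteq> 0" using p0 by auto
    moreover have "\<exists>c. F (lf k1 p *s u1) = c *s (lf k1 p *s u1)" using fx pu by metis
    ultimately show False using fixed_scale u1nf by blast
  qed
  show pz: "p = lf k2 p *s zx (lf k1 p / lf k2 p)"
    using pd k2 by (simp add: zx_def vec_eq_iff field_simps)
  have "\<exists>c. F (lf k2 p *s zx (lf k1 p / lf k2 p)) = c *s (lf k2 p *s zx (lf k1 p / lf k2 p))"
    using fx pz by metis
  then obtain c where "F (zx (lf k1 p / lf k2 p)) = c *s zx (lf k1 p / lf k2 p)"
    using fixed_scale[OF k2] by blast
  then show "poly rp (lf k1 p / lf k2 p) = 0" by (rule fixed_rp)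
qed

lemma zx_line_fixed: "poly rp x = 0 \<Longrightarrow> line_fixed a F (zx x)"
  unfolding line_fixed_def using zx_nz zx_co rp_root_F by blast

end




lemma pderiv_prod_lin_root:
  fixes S :: "complex set"
  assumes "finite S" "x \<in> S"
  shows "poly (pderiv (\<Prod>y\<in>S. [:-y, 1:])) x = (\<Prod>y\<in>S-{x}. (x - y))"
proof -
  have "poly (pderiv (\<Prod>y\<in>S. [:-y, 1:])) x = (\<Sum>b\<in>S. \<Prod>y\<in>S-{b}. (x - y))"
    by (simp add: pderiv_prod poly_sum poly_prod pderiv_pCons)
  also have "\<dots> = (\<Prod>y\<in>S-{x}. (x - y))"
  proof -
    have "(\<Sum>b\<in>S-{x}. \<Prod>y\<in>S-{b}. (x - y)) = 0"
      using assms by (intro sum.neutral) (auto simp: prod_zero_iff)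
    then show ?thesis using assms by (subst sum.remove[of _ x]) auto
  qed
  finally show ?thesis .
qed

context chart begin

theorem chart_main:
  fixes P :: "(complex^3) set" and lam mu :: "complex^3 \<Rightarrow> complex"
  assumes simple: "\<forall>p l. line_fixed a F p \<and> tangent_eig a F p l \<longrightarrow> l \<noteq> 1"
    and reps: "P \<subseteq> {p. line_fixed a F p}"
    and reps_all: "\<forall>q. line_fixed a F q \<longrightarrow> (\<exists>!p. p \<in> P \<and> proj_eq p q)"
    and lam: "\<forall>p\<in>P. tangent_eig a F p (lam p)"
    and mu: "\<forall>p\<in>P. eig_pair F p (lam p) (mu p)"
  shows "finite P \<and> (\<Sum>p\<in>P. (1 - mu p) / (1 - lam p)) = 1"
proof -
  define S where "S = {x. poly rp x = 0}"
  define chi where "chi p = lf k1 p / lf k2 p" for p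
  define g where "g = Qp - Np"
  have finS: "finite S" unfolding S_def using rp_nz by (rule poly_roots_finite)
  have lfP: "line_fixed a F p" if "p \<in> P" for p using reps that by auto
  have bij: "bij_betw chi P S"
  proof (rule bij_betwI')
    fix p p' assume pP: "p \<in> P" and pP': "p' \<in> P"
    show "(chi p = chi p') = (p = p')"
    proof
      assume eq: "chi p = chi p'"
      note L = line_fixed_chart[OF lfP[OF pP]] and L' = line_fixed_chart[OF lfP[OF pP']]
      have "p' = (lf k2 p' / lf k2 p) *s p"
        using L(1,2) L'(2) eq unfolding chi_def by (metis (no_types, lifting) L'(1) vector_smult_assoc
            nonzero_divide_eq_eq times_divide_eq_left)
      then have pe: "proj_eq p p'" using lfP[OF pP] lfP[OF pP'] unfolding proj_eq_def line_fixed_def by blast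
      have pe': "proj_eq p' p'" using lfP[OF pP'] unfolding proj_eq_def line_fixed_def
        by (metis vector_smult_lid)
      show "p = p'" using reps_all lfP[OF pP'] pP pP' pe pe' by metis
    qed simp
  next
    fix p assume "p \<in> P"
    then show "chi p \<in> S" using line_fixed_chart(3)[OF lfP] unfolding S_def chi_def by blast
  next
    fix x assume "x \<in> S"
    then have r: "poly rp x = 0" by (simp add: S_def)
    obtain p where pP: "p \<in> P" and pe: "proj_eq p (zx x)" using reps_all zx_line_fixed[OF r] by blast
    then obtain t where t: "zx x = t *s p" unfolding proj_eq_def by blast
    have "t \<noteq> 0" using t zx_nz by auto
    have "lf k1 (zx x) = t * lf k1 p" "lf k2 (zx x) = t * lf k2 p" using t by (simp_all add: lf_scale)
    then have e1: "x = t * lf k1 p" "t * lf k2 p = 1" by (simp_all add: zx_co)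
    then have "lf k2 p \<noteq> 0" by auto
    then have "chi p = x" using e1 by (simp add: chi_def field_simps)
    then show "\<exists>p\<in>P. x = chi p" using pP by blast
  qed
  have finP: "finite P" using bij finS bij_betw_finite by blast
  have point: "(1 - mu p) / (1 - lam p) = poly g (chi p) / poly (pderiv rp) (chi p)
     \<and> poly (pderiv rp) (chi p) \<noteq> 0" if pP: "p \<in> P" for p
  proof -
    note L = line_fixed_chart[OF lfP[OF pP]]
    define x where "x = chi p"
    define k where "k = lf k2 p"
    have r: "poly rp x = 0" and k: "k \<noteq> 0" and pk: "p = k *s zx x"
      using L unfolding x_def k_def chi_def by auto
    have Q: "poly Qp x \<noteq> 0" using rp_root_Q[OF r] .
    have lp: "lam p = 1 - poly (pderiv rp) x / poly Qp x"
      using tangent_unique[OF r k] lam pP pk by metis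
    have mp: "mu p = poly Np x / poly Qp x"
      using mu_formula[OF r k] lam mu pP pk by metis
    have "lam p \<noteq> 1" using simple lfP[OF pP] lam pP by blast
    then have r': "poly (pderiv rp) x \<noteq> 0" using lp by auto
    have "(1 - mu p) / (1 - lam p) = poly g x / poly (pderiv rp) x"
      unfolding lp mp g_def using Q r' by (simp add: field_simps)
    then show ?thesis using r' x_def by simp
  qed
  have "(\<Sum>p\<in>P. (1 - mu p) / (1 - lam p)) = (\<Sum>p\<in>P. poly g (chi p) / poly (pderiv rp) (chi p))"
    using point by (intro sum.cong) auto
  also have "\<dots> = (\<Sum>x\<in>S. poly g x / poly (pderiv rp) x)"
    by (rule sum.reindex_bij_betw[OF bij])
  finally have sumeq: "(\<Sum>p\<in>P. (1 - mu p) / (1 - lam p)) = (\<Sum>x\<in>S. poly g x / poly (pderiv rp) x)" .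
  have simpleS: "poly (pderiv rp) x \<noteq> 0" if xS: "x \<in> S" for x
  proof -
    have "x \<in> chi ` P" using bij xS unfolding bij_betw_def by blast
    then obtain p where "p \<in> P" "x = chi p" by blast
    then show ?thesis using point by blast
  qed
  have sqf: "rsquarefree rp" unfolding rsquarefree_roots using simpleS S_def by blast
  define q where "q = coeff Qp d"
  have q0: "q \<noteq> 0" using Q_lead q_def by simp
  have dec: "smult q (\<Prod>z\<in>S. [:-z, 1:]) = rp"
    using complex_poly_decompose_rsquarefree[OF sqf] lead_rp unfolding S_def q_def by simp
  have cardS: "card S = Suc d"
  proof -
    have "degree rp = degree (\<Prod>z\<in>S. [:-z, 1:])" using dec q0 by (metis degree_smult_eq)
    then show ?thesis using rp_degree prod_lin_degree_coeff(1)[OF finS] by simp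
  qed
  have Sne: "S \<noteq> {}" using cardS by auto
  have dr: "poly (pderiv rp) x = q * (\<Prod>y\<in>S-{x}. (x - y))" if "x \<in> S" for x
  proof -
    have "poly (pderiv rp) x = poly (pderiv (smult q (\<Prod>z\<in>S. [:-z, 1:]))) x" using dec by simp
    also have "\<dots> = q * (\<Prod>y\<in>S-{x}. (x - y))"
      by (simp add: pderiv_smult pderiv_prod_lin_root[OF finS that])
    finally show ?thesis .
  qed
  have degg: "degree g < card S"
  proof -
    have "degree g \<le> d" unfolding g_def Qp_def Np_def
      by (intro degree_diff_le Lpoly_degree dLpoly_degree)
    then show ?thesis using cardS by simp
  qed
  have "(\<Sum>x\<in>S. poly g x / poly (pderiv rp) x) = (\<Sum>x\<in>S. poly g x / (\<Prod>y\<in>S-{x}. (x - y))) / q"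
    by (simp add: dr sum_divide_distrib field_simps cong: sum.cong)
  also have "\<dots> = coeff g (card S - 1) / q" using lagrange_sum[OF finS Sne degg] by simp
  also have "coeff g (card S - 1) = q" using cardS by (simp add: g_def q_def Np_def dLpoly_coeff)
  finally show ?thesis using sumeq finP q0 by simp
qed

end



lemma basis_exists:
  assumes "(a::complex^3) \<noteq> 0"
  shows "\<exists>u1 u2 u3. cr u1 u2 = a \<and> lf a u3 = 1"
proof -
  have "a$1 \<noteq> 0 \<or> a$2 \<noteq> 0 \<or> a$3 \<noteq> 0" using assms by (auto simp: vec3_eq)
  then show ?thesis
  proof (elim disjE)
    assume h: "a$1 \<noteq> 0"
    show ?thesis
      by (rule exI[of _ "vector [-a$2/a$1, 1, 0]"], rule exI[of _ "vector [-a$3, 0, a$1]"],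
          rule exI[of _ "vector [1/a$1, 0, 0]"]) (use h in \<open>simp add: vec3_eq lf_3 field_simps\<close>)
  next
    assume h: "a$2 \<noteq> 0"
    show ?thesis
      by (rule exI[of _ "vector [0, -a$3/a$2, 1]"], rule exI[of _ "vector [a$2, -a$1, 0]"],
          rule exI[of _ "vector [0, 1/a$2, 0]"]) (use h in \<open>simp add: vec3_eq lf_3 field_simps\<close>)
  next
    assume h: "a$3 \<noteq> 0"
    show ?thesis
      by (rule exI[of _ "vector [1, 0, -a$1/a$3]"], rule exI[of _ "vector [0, a$3, -a$2]"],
          rule exI[of _ "vector [0, 0, 1/a$3]"]) (use h in \<open>simp add: vec3_eq lf_3 field_simps\<close>)
  qed
qed

lemma cr_shift: "cr (x *s u1 + u2) (- u1) = cr u1 u2"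
  by (simp add: vec3_eq algebra_simps)

context chart0 begin

lemma exists_nonfixed:
  assumes simple: "\<forall>p l. line_fixed a F p \<and> tangent_eig a F p l \<longrightarrow> l \<noteq> 1"
  shows "\<exists>x. \<not> (\<exists>c. F (zx x) = c *s zx x)"
proof (rule ccontr)
  assume "\<not> (\<exists>x. \<not> (\<exists>c. F (zx x) = c *s zx x))"
  then have "\<forall>x. poly rp x = 0" using fixed_rp by blast
  then have "rp = 0" using poly_all_0_iff_0 by blast
  then have r0: "poly rp 0 = 0" and d0: "poly (pderiv rp) 0 = 0" by simp_all
  have "tangent_eig a F (zx 0) 1" using tangent_exists[OF r0] d0 by simp
  moreover have "line_fixed a F (zx 0)"
    unfolding line_fixed_def using zx_nz zx_co rp_root_F[OF r0] by blast
  ultimately show False using simple by blast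
qed

theorem main_chart0:
  fixes P :: "(complex^3) set" and lam mu :: "complex^3 \<Rightarrow> complex"
  assumes simple: "\<forall>p l. line_fixed a F p \<and> tangent_eig a F p l \<longrightarrow> l \<noteq> 1"
    and reps: "P \<subseteq> {p. line_fixed a F p}"
    and reps_all: "\<forall>q. line_fixed a F q \<longrightarrow> (\<exists>!p. p \<in> P \<and> proj_eq p q)"
    and lam: "\<forall>p\<in>P. tangent_eig a F p (lam p)"
    and mu: "\<forall>p\<in>P. eig_pair F p (lam p) (mu p)"
  shows "finite P \<and> (\<Sum>p\<in>P. (1 - mu p) / (1 - lam p)) = 1"
proof -
  obtain x where nf: "\<not> (\<exists>c. F (zx x) = c *s zx x)" using exists_nonfixed[OF simple] by blast
  interpret c: chart F d C a "zx x" "- u1" u3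
  proof unfold_locales
    show "cr (zx x) (- u1) = a" unfolding zx_def cr_shift by (rule cru)
  qed (use FC u3 inv Fnz nf in auto)
  show ?thesis by (rule c.chart_main[OF simple reps reps_all lam mu])
qed

end

theorem mainTheorem5:
  fixes F :: "complex^3 \<Rightarrow> complex^3" and d :: nat and a :: "complex^3"
    and P :: "(complex^3) set" and lam mu :: "complex^3 \<Rightarrow> complex"
  assumes holo: "holo_P2_lift d F"
    and line: "a \<noteq> 0"
    and inv: "\<forall>z. z \<noteq> 0 \<and> lf a z = 0 \<longrightarrow> lf a (F z) = 0"
    and simple: "\<forall>p l. line_fixed a F p \<and> tangent_eig a F p l \<longrightarrow> l \<noteq> 1"
    and reps: "P \<subseteq> {p. line_fixed a F p}"
    and reps_all: "\<forall>q. line_fixed a F q \<longrightarrow> (\<exists>!p. p \<in> P \<and> proj_eq p q)"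
    and lam: "\<forall>p\<in>P. tangent_eig a F p (lam p)"
    and mu: "\<forall>p\<in>P. eig_pair F p (lam p) (mu p)"
  shows "finite P \<and> (\<Sum>p\<in>P. (1 - mu p) / (1 - lam p)) = 1"
proof -
  obtain C where FC: "\<And>z i. F z $ i = (\<Sum>e\<in>exps d. C i e * monom3 e z)"
    using holo unfolding holo_P2_lift_def hom_poly_map_def by blast
  have Fnz: "\<forall>z. F z = 0 \<longrightarrow> z = 0" using holo unfolding holo_P2_lift_def by blast
  obtain u1 u2 u3 where b: "cr u1 u2 = a" "lf a u3 = 1" using basis_exists[OF line] by blast
  interpret c0: chart0 F d C a u1 u2 u3
    by unfold_locales (use FC b inv Fnz in auto)
  show ?thesis by (rule c0.main_chart0[OF simple reps reps_all lam mu])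
qed

end
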